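(* For $m\ge1$ let $G_m=P_{4m} \times P_{3m}$. Then $\dim_{1,f}(G_m)=\Theta(m^2)$ as $m\to\infty$.
   Context: $P_n$ is the path on $n$ vertices and $\times$ denotes the Cartesian product, so $P_s\times P_t$ is the $s\times t$ grid graph. $d(x,y)$ is the distance in $G$. $d_1(x,y)=\min\{d(x,y),2\}$ and $R_1\{x,y\}=\{z\in V(G): d_1(x,z)\neq d_1(y,z)\}$. For a function $g$ on $V(G)$ and $U\subseteq V(G)$, $g(U)=\sum_{s\in U}g(s)$. A function $h:V(G)\to[0,1]$ is a $1$-truncated resolving function of $G$ if $h(R_1\{x,y\})\ge 1$ for all distinct $x,y\in V(G)$; $\dim_{1,f}(G)$ is the minimum of $h(V(G))$ over all such $h$. $f=\Theta(g)$ means there are positive constants $c_1,c_2,N$ with $c_1|g(m)|\le|f(m)|\le c_2|g(m)|$ for all $m>N$. *)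

theory Defs
  imports Complex_Main
begin

text \<open>A graph is given by a vertex set V and a symmetric adjacency relation E.\<close>

definition path_graph_V :: "nat \<Rightarrow> nat set" where
  "path_graph_V n = {0..<n}"

definition path_graph_E :: "nat \<Rightarrow> nat \<Rightarrow> bool" where
  "path_graph_E a b \<longleftrightarrow> a + 1 = b \<or> b + 1 = a"

definition cart_V :: "'a set \<Rightarrow> 'b set \<Rightarrow> ('a \<times> 'b) set" where
  "cart_V V1 V2 = V1 \<times> V2"

definition cart_E :: "('a \<Rightarrow> 'a \<Rightarrow> bool) \<Rightarrow> ('b \<Rightarrow> 'b \<Rightarrow> bool)
    \<Rightarrow> ('a \<times> 'b) \<Rightarrow> ('a \<times> 'b) \<Rightarrow> bool" where
  "cart_E E1 E2 x y \<longleftrightarrow>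
     (fst x = fst y \<and> E2 (snd x) (snd y)) \<or> (snd x = snd y \<and> E1 (fst x) (fst y))"

definition grid_V :: "nat \<Rightarrow> nat \<Rightarrow> (nat \<times> nat) set" where
  "grid_V s t = cart_V (path_graph_V s) (path_graph_V t)"

definition grid_E :: "(nat \<times> nat) \<Rightarrow> (nat \<times> nat) \<Rightarrow> bool" where
  "grid_E = cart_E path_graph_E path_graph_E"

text \<open>Graph distance: length of a shortest walk within V (graphs here are connected).\<close>

definition gdist :: "'a set \<Rightarrow> ('a \<Rightarrow> 'a \<Rightarrow> bool) \<Rightarrow> 'a \<Rightarrow> 'a \<Rightarrow> nat" where
  "gdist V E x y = (LEAST k. \<exists>p. length p = Suc k \<and> hd p = x \<and> last p = y \<and>
      set p \<subseteq> V \<and> (\<forall>i<k. E (p ! i) (p ! Suc i)))"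

definition tdist1 :: "'a set \<Rightarrow> ('a \<Rightarrow> 'a \<Rightarrow> bool) \<Rightarrow> 'a \<Rightarrow> 'a \<Rightarrow> nat" where
  "tdist1 V E x y = min (gdist V E x y) 2"

definition R1 :: "'a set \<Rightarrow> ('a \<Rightarrow> 'a \<Rightarrow> bool) \<Rightarrow> 'a \<Rightarrow> 'a \<Rightarrow> 'a set" where
  "R1 V E x y = {z \<in> V. tdist1 V E x z \<noteq> tdist1 V E y z}"

definition trunc1_resolving_fun :: "'a set \<Rightarrow> ('a \<Rightarrow> 'a \<Rightarrow> bool) \<Rightarrow> ('a \<Rightarrow> real) \<Rightarrow> bool" where
  "trunc1_resolving_fun V E h \<longleftrightarrow>
     (\<forall>z\<in>V. 0 \<le> h z \<and> h z \<le> 1) \<and>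
     (\<forall>x\<in>V. \<forall>y\<in>V. x \<noteq> y \<longrightarrow> sum h (R1 V E x y) \<ge> 1)"

text \<open>Fractional 1-truncated metric dimension (the minimum is attained; we take the infimum).\<close>

definition frac_trunc1_dim :: "'a set \<Rightarrow> ('a \<Rightarrow> 'a \<Rightarrow> bool) \<Rightarrow> real" where
  "frac_trunc1_dim V E = Inf {sum h V | h. trunc1_resolving_fun V E h}"

end

theory Submission imports Defs begin

definition walk :: "'a set \<Rightarrow> ('a \<Rightarrow> 'a \<Rightarrow> bool) \<Rightarrow> 'a \<Rightarrow> 'a \<Rightarrow> nat \<Rightarrow> bool" where
  "walk V E x y k \<longleftrightarrow> (\<exists>p. length p = Suc k \<and> hd p = x \<and> last p = y \<and>
      set p \<subseteq> V \<and> (\<forall>i<k. E (p ! i) (p ! Suc i)))"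

lemma gdist_walk: "gdist V E x y = (LEAST k. walk V E x y k)"
  unfolding gdist_def walk_def by simp

lemma walk_refl: "x \<in> V \<Longrightarrow> walk V E x x 0"
  unfolding walk_def by (rule exI[of _ "[x]"]) simp

lemma walk_snoc:
  assumes "walk V E x y k" "E y z" "z \<in> V"
  shows "walk V E x z (Suc k)"
proof -
  obtain p where p: "length p = Suc k" "hd p = x" "last p = y" "set p \<subseteq> V"
    "\<forall>i<k. E (p ! i) (p ! Suc i)" using assms(1) unfolding walk_def by blast
  have ne: "p \<noteq> []" using p(1) by auto
  have lk: "p ! k = y" using p(1,3) ne by (simp add: last_conv_nth)
  show ?thesis unfolding walk_def
  proof (intro exI[of _ "p @ [z]"] conjI allI impI)
    fix i assume i: "i < Suc k"
    show "E ((p @ [z]) ! i) ((p @ [z]) ! Suc i)"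
    proof (cases "i < k")
      case True thus ?thesis using p(1,5) by (simp add: nth_append)
    next
      case False hence "i = k" using i by simp
      thus ?thesis using p(1) lk assms(2) by (simp add: nth_append)
    qed
  qed (use p ne assms in auto)
qed

lemma walk_0: "walk V E x y 0 \<Longrightarrow> x = y"
  unfolding walk_def by (auto simp: length_Suc_conv)

lemma walk_1: "walk V E x y 1 \<Longrightarrow> E x y"
proof -
  assume "walk V E x y 1"
  then obtain p where p: "length p = 2" "hd p = x" "last p = y" "E (p ! 0) (p ! 1)"
    unfolding walk_def by (metis One_nat_def Suc_1 lessI)
  then obtain a b where "p = [a, b]" by (auto simp: length_Suc_conv numeral_2_eq_2)
  thus ?thesis using p by simp
qed

lemma gdist_ge2:
  assumes "\<exists>k. walk V E x z k" "z \<noteq> x" "\<not> E x z"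
  shows "gdist V E x z \<ge> 2"
proof -
  have w: "walk V E x z (gdist V E x z)" unfolding gdist_walk using assms(1) by (rule LeastI_ex)
  show ?thesis
  proof (rule ccontr)
    assume "\<not> 2 \<le> gdist V E x z"
    hence "gdist V E x z = 0 \<or> gdist V E x z = 1" by auto
    thus False using w assms walk_0 walk_1 by metis
  qed
qed

lemma gdist_pos:
  assumes "\<exists>k. walk V E x z k" "z \<noteq> x"
  shows "gdist V E x z \<noteq> 0"
proof
  have w: "walk V E x z (gdist V E x z)" unfolding gdist_walk using assms(1) by (rule LeastI_ex)
  assume "gdist V E x z = 0"
  thus False using w assms walk_0 by metis
qed

lemma gdist_self: "x \<in> V \<Longrightarrow> gdist V E x x = 0"
  unfolding gdist_walk using walk_refl by (metis Least_eq_0)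

lemma grid_conn:
  assumes "x \<in> grid_V s t" 
  shows "\<forall>y\<in>grid_V s t. nat \<bar>int (fst x) - int (fst y)\<bar> + nat \<bar>int (snd x) - int (snd y)\<bar> = n
     \<longrightarrow> walk (grid_V s t) grid_E x y n"
proof (induction n)
  case 0
  then show ?case using assms walk_refl by (auto simp: prod_eq_iff)
next
  case (Suc n)
  show ?case
  proof (intro ballI impI)
    fix y assume y: "y \<in> grid_V s t"
      and d: "nat \<bar>int (fst x) - int (fst y)\<bar> + nat \<bar>int (snd x) - int (snd y)\<bar> = Suc n"
    obtain a b where ab: "x = (a, b)" by force
    obtain c d' where cd: "y = (c, d')" by force
    have xa: "a < s" "b < t" and yc: "c < s" "d' < t" using assms y ab cd
      by (auto simp: grid_V_def cart_V_def path_graph_V_def)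
    show "walk (grid_V s t) grid_E x y (Suc n)"
    proof (cases "d' = b")
      case True
      hence "c \<noteq> a" using d ab cd by auto
      define c' where "c' = (if c < a then c + 1 else c - 1)"
      have "(c', d') \<in> grid_V s t" using xa yc c'_def \<open>c \<noteq> a\<close>
        by (auto simp: grid_V_def cart_V_def path_graph_V_def)
      moreover have "nat \<bar>int (fst x) - int c'\<bar> + nat \<bar>int (snd x) - int d'\<bar> = n"
        using d ab cd c'_def \<open>c \<noteq> a\<close> by auto
      ultimately have "walk (grid_V s t) grid_E x (c', d') n" using Suc.IH by auto
      moreover have "grid_E (c', d') y" using cd c'_def \<open>c \<noteq> a\<close>
        by (auto simp: grid_E_def cart_E_def path_graph_E_def)
      ultimately show ?thesis using walk_snoc y by metis
    next
      case False
      define e where "e = (if d' < b then d' + 1 else d' - 1)"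
      have "(c, e) \<in> grid_V s t" using xa yc e_def False
        by (auto simp: grid_V_def cart_V_def path_graph_V_def)
      moreover have "nat \<bar>int (fst x) - int c\<bar> + nat \<bar>int (snd x) - int e\<bar> = n"
        using d ab cd e_def False by auto
      ultimately have "walk (grid_V s t) grid_E x (c, e) n" using Suc.IH by auto
      moreover have "grid_E (c, e) y" using cd e_def False
        by (auto simp: grid_E_def cart_E_def path_graph_E_def)
      ultimately show ?thesis using walk_snoc y by metis
    qed
  qed
qed

lemma grid_conn': "x \<in> grid_V s t \<Longrightarrow> y \<in> grid_V s t \<Longrightarrow> \<exists>k. walk (grid_V s t) grid_E x y k"
  using grid_conn by blast

lemma finite_grid: "finite (grid_V s t)"
  by (simp add: grid_V_def cart_V_def path_graph_V_def)

lemma R1_sub: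
  assumes "x \<in> grid_V s t" "y \<in> grid_V s t" "z \<in> R1 (grid_V s t) grid_E x y"
  shows "z = x \<or> z = y \<or> grid_E x z \<or> grid_E y z"
proof (rule ccontr)
  assume "\<not> ?thesis"
  moreover have z: "z \<in> grid_V s t" using assms(3) by (simp add: R1_def)
  ultimately have "gdist (grid_V s t) grid_E x z \<ge> 2" "gdist (grid_V s t) grid_E y z \<ge> 2"
    using gdist_ge2 grid_conn' assms(1,2) by metis+
  hence "tdist1 (grid_V s t) grid_E x z = tdist1 (grid_V s t) grid_E y z"
    by (simp add: tdist1_def)
  thus False using assms(3) by (simp add: R1_def)
qed

lemma one_resolving: "trunc1_resolving_fun (grid_V s t) grid_E (\<lambda>_. 1)"
  unfolding trunc1_resolving_fun_def
proof (intro conjI ballI impI)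
  fix x y assume x: "x \<in> grid_V s t" and y: "y \<in> grid_V s t" and xy: "x \<noteq> y"
  have "gdist (grid_V s t) grid_E x x = 0" using x by (rule gdist_self)
  moreover have "gdist (grid_V s t) grid_E y x \<noteq> 0" using gdist_pos grid_conn' x y xy by metis
  ultimately have "x \<in> R1 (grid_V s t) grid_E x y" using x by (simp add: R1_def tdist1_def)
  moreover have "finite (R1 (grid_V s t) grid_E x y)"
    using finite_grid by (rule finite_subset[rotated]) (auto simp: R1_def)
  ultimately have "card (R1 (grid_V s t) grid_E x y) \<ge> 1"
    by (metis One_nat_def Suc_leI card_gt_0_iff empty_iff)
  thus "1 \<le> (\<Sum>z\<in>R1 (grid_V s t) grid_E x y. (1::real))" by simp
qed auto

lemma lower:
  assumes h: "trunc1_resolving_fun (grid_V (4*m) (3*m)) grid_E h"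
  shows "real (m * m) \<le> sum h (grid_V (4*m) (3*m))"
proof -
  define V where "V = grid_V (4*m) (3*m)"
  define g where "g = (\<lambda>z::nat\<times>nat. (fst z div 4, snd z div 3))"
  have hn: "\<forall>z\<in>V. 0 \<le> h z" and hr: "\<forall>x\<in>V. \<forall>y\<in>V. x \<noteq> y \<longrightarrow> sum h (R1 V grid_E x y) \<ge> 1"
    using h unfolding trunc1_resolving_fun_def V_def by auto
  have fV: "finite V" unfolding V_def by (rule finite_grid)
  have gV: "g ` V \<subseteq> {..<m} \<times> {..<m}"
    by (auto simp: g_def V_def grid_V_def cart_V_def path_graph_V_def)
  have eq: "(\<Sum>q\<in>{..<m} \<times> {..<m}. sum h {z \<in> V. g z = q}) = sum h V"
    by (rule sum.group[OF fV _ gV]) simp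
  have each: "sum h {z \<in> V. g z = q} \<ge> 1" if q: "q \<in> {..<m} \<times> {..<m}" for q
  proof -
    obtain i j where ij: "q = (i, j)" "i < m" "j < m" using q by auto
    define x where "x = (4*i+1, 3*j+1)"
    define y where "y = (4*i+2, 3*j+1)"
    have xV: "x \<in> V" and yV: "y \<in> V" using ij
      by (auto simp: x_def y_def V_def grid_V_def cart_V_def path_graph_V_def)
    have sub: "R1 V grid_E x y \<subseteq> {z \<in> V. g z = q}"
    proof
      fix z assume z: "z \<in> R1 V grid_E x y"
      hence zV: "z \<in> V" by (simp add: R1_def)
      have "z = x \<or> z = y \<or> grid_E x z \<or> grid_E y z" using R1_sub xV yV z unfolding V_def by blast
      hence "4*i \<le> fst z \<and> fst z \<le> 4*i+3 \<and> 3*j \<le> snd z \<and> snd z \<le> 3*j+2"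
        by (auto simp: x_def y_def grid_E_def cart_E_def path_graph_E_def)
      hence "g z = q" unfolding g_def ij by (auto; presburger)
      thus "z \<in> {z \<in> V. g z = q}" using zV by simp
    qed
    have "1 \<le> sum h (R1 V grid_E x y)" using hr xV yV by (simp add: x_def y_def)
    also have "\<dots> \<le> sum h {z \<in> V. g z = q}"
      by (rule sum_mono2) (use fV sub hn in auto)
    finally show ?thesis .
  qed
  have "real (m * m) = (\<Sum>q\<in>{..<m} \<times> {..<m}. (1::real))" by simp
  also have "\<dots> \<le> (\<Sum>q\<in>{..<m} \<times> {..<m}. sum h {z \<in> V. g z = q})"
    by (rule sum_mono) (rule each)
  finally show ?thesis using eq V_def by simp
qed

lemma card_gridV: "card (grid_V s t) = s * t"
  by (simp add: grid_V_def cart_V_def path_graph_V_def card_cartesian_product)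

theorem proposition3p8:
  shows "\<exists>c1 c2 :: real. \<exists>N :: nat. c1 > 0 \<and> c2 > 0 \<and>
    (\<forall>m > N. c1 * \<bar>real m ^ 2\<bar> \<le> \<bar>frac_trunc1_dim (grid_V (4*m) (3*m)) grid_E\<bar> \<and>
              \<bar>frac_trunc1_dim (grid_V (4*m) (3*m)) grid_E\<bar> \<le> c2 * \<bar>real m ^ 2\<bar>)"
proof (intro exI conjI allI impI)
  fix m :: nat
  define V where "V = grid_V (4*m) (3*m)"
  define S where "S = {sum h V | h. trunc1_resolving_fun V grid_E h}"
  have one: "sum (\<lambda>_. 1::real) V \<in> S" unfolding S_def V_def using one_resolving by blast
  have onev: "sum (\<lambda>_. 1::real) V = 12 * real m ^ 2"
    unfolding V_def by (simp add: card_gridV power2_eq_square)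
  have low: "\<forall>s\<in>S. real (m*m) \<le> s" unfolding S_def V_def using lower by blast
  have bdd: "bdd_below S" using low by (auto simp: bdd_below_def)
  have "Inf S \<le> 12 * real m ^ 2" using cInf_lower[OF one bdd] onev by simp
  moreover have "real (m*m) \<le> Inf S" using one low by (intro cInf_greatest) auto
  moreover have "frac_trunc1_dim V grid_E = Inf S" by (simp add: frac_trunc1_dim_def S_def)
  ultimately show "1 * \<bar>real m ^ 2\<bar> \<le> \<bar>frac_trunc1_dim (grid_V (4*m) (3*m)) grid_E\<bar>"
     "\<bar>frac_trunc1_dim (grid_V (4*m) (3*m)) grid_E\<bar> \<le> 12 * \<bar>real m ^ 2\<bar>"
    unfolding V_def by (auto simp: power2_eq_square)
qed auto

end
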